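(* Let $(X,\le)$ be a partially ordered set, $K_x=\{y\in X:y\le x\}$, and $\tau_\le$ the topology generated by the sets $K_x$ and $X\setminus K_x$, $x\in X$. If $(X,\tau_\le)$ is compact, then $(X,\tau_\le,\le)$ is a Noetherian Priestley space.
   Context: A Priestley space is a partially ordered set with a quasi-compact topology such that whenever $y\not\le x$ there is a clopen down-set containing $x$ but not $y$. It is Noetherian if every decreasing sequence of closed down-sets is eventually stationary (equivalently the topology of open up-sets is Noetherian). *)

theory Defs
  imports "HOL-Analysis.Analysis"
begin

definition poset_on :: "'a set \<Rightarrow> ('a \<Rightarrow> 'a \<Rightarrow> bool) \<Rightarrow> bool" where
  "poset_on X le \<longleftrightarrow>
     (\<forall>x\<in>X. le x x) \<and>
     (\<forall>x\<in>X. \<forall>y\<in>X. le x y \<and> le y x \<longrightarrow> x = y) \<and>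
     (\<forall>x\<in>X. \<forall>y\<in>X. \<forall>z\<in>X. le x y \<and> le y z \<longrightarrow> le x z)"

definition down_of :: "'a set \<Rightarrow> ('a \<Rightarrow> 'a \<Rightarrow> bool) \<Rightarrow> 'a \<Rightarrow> 'a set" where
  "down_of X le x = {y\<in>X. le y x}"

definition down_set :: "'a set \<Rightarrow> ('a \<Rightarrow> 'a \<Rightarrow> bool) \<Rightarrow> 'a set \<Rightarrow> bool" where
  "down_set X le A \<longleftrightarrow> A \<subseteq> X \<and> (\<forall>x\<in>A. \<forall>y\<in>X. le y x \<longrightarrow> y \<in> A)"

definition priestley_space :: "'a set \<Rightarrow> 'a topology \<Rightarrow> ('a \<Rightarrow> 'a \<Rightarrow> bool) \<Rightarrow> bool" where
  "priestley_space X T le \<longleftrightarrow>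
     poset_on X le \<and> topspace T = X \<and> compact_space T \<and>
     (\<forall>x\<in>X. \<forall>y\<in>X. \<not> le y x \<longrightarrow>
        (\<exists>U. openin T U \<and> closedin T U \<and> down_set X le U \<and> x \<in> U \<and> y \<notin> U))"

definition noetherian_priestley_space :: "'a set \<Rightarrow> 'a topology \<Rightarrow> ('a \<Rightarrow> 'a \<Rightarrow> bool) \<Rightarrow> bool" where
  "noetherian_priestley_space X T le \<longleftrightarrow>
     priestley_space X T le \<and>
     (\<forall>C :: nat \<Rightarrow> 'a set.
        (\<forall>n. closedin T (C n) \<and> down_set X le (C n)) \<and> (\<forall>n. C (Suc n) \<subseteq> C n) \<longrightarrow>
        (\<exists>N. \<forall>n\<ge>N. C n = C N))"

definition tau_le :: "'a set \<Rightarrow> ('a \<Rightarrow> 'a \<Rightarrow> bool) \<Rightarrow> 'a topology" where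
  "tau_le X le = topology_generated_by
     ((\<lambda>x. down_of X le x) ` X \<union> (\<lambda>x. X - down_of X le x) ` X)"

end

theory Submission
  imports Defs
begin

lemma tau_topspace:
  assumes "poset_on X le"
  shows "topspace (tau_le X le) = X"
proof -
  have "\<Union>((\<lambda>x. down_of X le x) ` X \<union> (\<lambda>x. X - down_of X le x) ` X) = X"
  proof
    show "\<Union>((\<lambda>x. down_of X le x) ` X \<union> (\<lambda>x. X - down_of X le x) ` X) \<subseteq> X"
      unfolding down_of_def by blast
    show "X \<subseteq> \<Union>((\<lambda>x. down_of X le x) ` X \<union> (\<lambda>x. X - down_of X le x) ` X)"
      by blast
  qed
  then show ?thesis by (simp add: tau_le_def)
qed

lemma tau_open_down:
  "x \<in> X \<Longrightarrow> openin (tau_le X le) (down_of X le x)"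
  unfolding tau_le_def by (rule topology_generated_by_Basis) blast

lemma tau_open_up:
  "x \<in> X \<Longrightarrow> openin (tau_le X le) (X - down_of X le x)"
  unfolding tau_le_def by (rule topology_generated_by_Basis) blast

theorem proposition3p13:
  fixes X :: "'a set" and le :: "'a \<Rightarrow> 'a \<Rightarrow> bool"
  assumes "poset_on X le"
    and "compact_space (tau_le X le)"
  shows "noetherian_priestley_space X (tau_le X le) le"
proof -
  let ?T = "tau_le X le"
  have top: "topspace ?T = X" using tau_topspace[OF assms(1)] .
  have po: "\<forall>x\<in>X. le x x" "\<forall>x\<in>X. \<forall>y\<in>X. \<forall>z\<in>X. le x y \<and> le y z \<longrightarrow> le x z"
    using assms(1) unfolding poset_on_def by blast+
  have sep: "\<exists>U. openin ?T U \<and> closedin ?T U \<and> down_set X le U \<and> x \<in> U \<and> y \<notin> U"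
    if x: "x \<in> X" and y: "y \<in> X" and nle: "\<not> le y x" for x y
  proof -
    have o: "openin ?T (down_of X le x)" using tau_open_down[OF x] .
    have sub: "down_of X le x \<subseteq> X" unfolding down_of_def by blast
    have c: "closedin ?T (down_of X le x)"
      unfolding closedin_def top using tau_open_up[OF x] sub by blast
    have d: "down_set X le (down_of X le x)"
      unfolding down_set_def down_of_def using po(2) x by blast
    have i: "x \<in> down_of X le x" unfolding down_of_def using po(1) x by blast
    have n: "y \<notin> down_of X le x" unfolding down_of_def using nle by blast
    show ?thesis using o c d i n by blast
  qed
  have pri: "priestley_space X ?T le"
    unfolding priestley_space_def using assms top sep by blast
  have noeth: "\<exists>N. \<forall>n\<ge>N. C n = C N"
    if cl: "\<forall>n. closedin ?T (C n) \<and> down_set X le (C n)" and dec: "\<forall>n. C (Suc n) \<subseteq> C n"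
    for C :: "nat \<Rightarrow> 'a set"
  proof -
    have mono: "C m \<subseteq> C n" if "n \<le> m" for n m
      using dec that by (metis lift_Suc_antimono_le)
    define Ci where "Ci = \<Inter>(range C)"
    have Ci_mem: "x \<in> Ci \<longleftrightarrow> (\<forall>n. x \<in> C n)" for x unfolding Ci_def by blast
    have CX: "C n \<subseteq> X" for n using cl unfolding down_set_def by blast
    have CiX: "Ci \<subseteq> X" using CX Ci_mem by blast
    define U where "U = range (\<lambda>n. X - C n) \<union> (\<lambda>x. down_of X le x) ` Ci"
    have U_mem: "B \<in> U \<longleftrightarrow> B \<in> range (\<lambda>n. X - C n) \<or> B \<in> (\<lambda>x. down_of X le x) ` Ci" for B
      unfolding U_def by blast
    have Uo: "\<forall>B\<in>U. openin ?T B"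
    proof
      fix B assume "B \<in> U"
      then show "openin ?T B"
      proof (cases "B \<in> range (\<lambda>n. X - C n)")
        case True
        then obtain n where Bn: "B = X - C n" by blast
        have "closedin ?T (C n)" using cl by blast
        then have "openin ?T (topspace ?T - C n)" by (simp add: closedin_def)
        then show ?thesis using Bn top by simp
      next
        case False
        with \<open>B \<in> U\<close> have "B \<in> (\<lambda>x. down_of X le x) ` Ci" using U_mem by blast
        then obtain x where "x \<in> Ci" "B = down_of X le x" by blast
        then show ?thesis using tau_open_down[of x X le] CiX by auto
      qed
    qed
    have Ucov: "topspace ?T \<subseteq> \<Union>U"
    proof
      fix x assume "x \<in> topspace ?T"
      then have x: "x \<in> X" using top by simp
      show "x \<in> \<Union>U"
      proof (cases "x \<in> Ci")
        case True
        then have "down_of X le x \<in> U" using U_mem by blast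
        moreover have "x \<in> down_of X le x" using po x unfolding down_of_def by blast
        ultimately show ?thesis by blast
      next
        case False
        then obtain n where "x \<notin> C n" using Ci_mem by blast
        then have "x \<in> X - C n" "X - C n \<in> U" using x U_mem by blast+
        then show ?thesis by blast
      qed
    qed
    obtain F where F: "finite F" "F \<subseteq> U" "topspace ?T \<subseteq> \<Union>F"
      using assms(2)[unfolded compact_space_alt, THEN spec[of _ U]] Uo Ucov by blast
    have "finite (F \<inter> range (\<lambda>n. X - C n))" using F by simp
    moreover have "F \<inter> range (\<lambda>n. X - C n) \<subseteq> (\<lambda>n. X - C n) ` UNIV" by blast
    ultimately obtain I where I: "finite I" "F \<inter> range (\<lambda>n. X - C n) = (\<lambda>n. X - C n) ` I"
      by (metis finite_subset_image subset_UNIV)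
    define N where "N = Max (insert 0 I)"
    have IN: "n \<le> N" if "n \<in> I" for n using I that unfolding N_def by simp
    have CN: "C N \<subseteq> Ci"
    proof
      fix x assume xN: "x \<in> C N"
      then have x: "x \<in> X" using CX by blast
      then obtain B where B: "B \<in> F" "x \<in> B" using F top by blast
      show "x \<in> Ci"
      proof (cases "B \<in> range (\<lambda>n. X - C n)")
        case True
        then have "B \<in> (\<lambda>n. X - C n) ` I" using I B by blast
        then obtain n where n: "n \<in> I" "B = X - C n" by blast
        have "C N \<subseteq> C n" using mono[OF IN[OF n(1)]] .
        then have False using xN B n by blast
        then show ?thesis ..
      next
        case False
        have "B \<in> U" using B F by blast
        with False have "B \<in> (\<lambda>x. down_of X le x) ` Ci" using U_mem by blast
        then obtain g where g: "g \<in> Ci" "B = down_of X le g" by blast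
        have "x \<in> C m" for m
        proof -
          have "g \<in> C m" using g Ci_mem by blast
          moreover have "le x g" using g B by (simp add: down_of_def)
          moreover have "down_set X le (C m)" using cl by blast
          ultimately show "x \<in> C m" using x by (simp add: down_set_def)
        qed
        then show ?thesis using Ci_mem by blast
      qed
    qed
    show ?thesis
    proof (intro exI allI impI)
      fix n assume "N \<le> n"
      then have "C n \<subseteq> C N" by (rule mono)
      moreover have "C N \<subseteq> C n" using CN Ci_mem by blast
      ultimately show "C n = C N" by blast
    qed
  qed
  show ?thesis unfolding noetherian_priestley_space_def
    using pri noeth by blast
qed

end
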